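(* Let $R>0$, $S^2(R)=\{y\in\mathbb{R}^3:|y|=R\}$, and fix $x\in\mathbb{R}^3$ with $r=|x|$, $0<r\neq R$. For every real $b\neq0$, $$\int_{S^2(R)}\omega(x,y)^{1+ib}\,dS_y=\frac{2\pi R}{r}\cdot\frac{|R^2-r^2|}{b}\cdot\sin\!\left(b\ln\frac{R+r}{|R-r|}\right),$$ and $$\int_{S^2(R)}\omega(x,y)\,dS_y=\frac{2\pi R}{r}\cdot|R^2-r^2|\cdot\ln\frac{R+r}{|R-r|}.$$
   Context: For $x\neq y$, $\omega(x,y)=\left|\dfrac{|x|^2-|y|^2}{|x-y|^2}\right|$; $dS_y$ is the surface measure on $S^2(R)$; $\omega^{1+ib}=e^{(1+ib)\ln\omega}$. *)

theory Defs
  imports "HOL-Analysis.Analysis"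
begin

definition omega :: "real^3 \<Rightarrow> real^3 \<Rightarrow> real" where
  "omega x y = \<bar>(norm x ^ 2 - norm y ^ 2) / (norm (x - y) ^ 2)\<bar>"

definition omega_cpow :: "real \<Rightarrow> real^3 \<Rightarrow> real^3 \<Rightarrow> complex" where
  "omega_cpow b x y = exp (Complex 1 b * of_real (ln (omega x y)))"

definition sph :: "real \<Rightarrow> real \<times> real \<Rightarrow> real^3" where
  "sph R p = vector [R * sin (fst p) * cos (snd p), R * sin (fst p) * sin (snd p), R * cos (fst p)]"

text \<open>Surface integral over S^2(R) w.r.t. the surface measure dS, expressed via the
  standard parametrization, with area element R^2 sin(theta) dtheta dphi.\<close>
definition has_sphere_integral ::
  "(real^3 \<Rightarrow> 'a::euclidean_space) \<Rightarrow> 'a \<Rightarrow> real \<Rightarrow> bool" where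
  "has_sphere_integral f I R \<longleftrightarrow>
     ((\<lambda>p. (R^2 * sin (fst p)) *\<^sub>R f (sph R p)) has_integral I) (cbox (0, 0) (pi, 2 * pi))"

end

theory Submission
  imports Defs
begin


lemma div_zero:
  fixes P Q Pt Qp :: "real \<Rightarrow> real \<Rightarrow> 'a::euclidean_space"
  assumes cPt: "continuous_on (cbox (0,0) (pi,2 * pi)) (\<lambda>(t,u). Pt t u)"
  and cQp: "continuous_on (cbox (0,0) (pi,2 * pi)) (\<lambda>(t,u). Qp t u)"
  and dP: "\<And>t u. t \<in> {0..pi} \<Longrightarrow> u \<in> {0..2 * pi} \<Longrightarrow> ((\<lambda>t. P t u) has_vector_derivative Pt t u) (at t within {0..pi})"
  and dQ: "\<And>t u. t \<in> {0..pi} \<Longrightarrow> u \<in> {0..2 * pi} \<Longrightarrow> ((\<lambda>u. Q t u) has_vector_derivative Qp t u) (at u within {0..2 * pi})"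
  and bP: "\<And>u. u \<in> {0..2 * pi} \<Longrightarrow> P pi u = P 0 u"
  and bQ: "\<And>t. t \<in> {0..pi} \<Longrightarrow> Q t (2 * pi) = Q t 0"
  shows "integral (cbox (0,0) (pi,2 * pi)) (\<lambda>(t,u). Pt t u + Qp t u) = 0"
proof -
  let ?B = "cbox (0::real,0::real) (pi,2 * pi)"
  have "integral ?B (\<lambda>(t,u). Pt t u + Qp t u) = integral ?B (\<lambda>(t,u). Pt t u) + integral ?B (\<lambda>(t,u). Qp t u)"
    using integral_add[OF integrable_continuous[OF cPt] integrable_continuous[OF cQp]]
    by (simp add: split_def)
  also have "integral ?B (\<lambda>(t,u). Pt t u) = 0"
  proof -
    have "integral ?B (\<lambda>(t,u). Pt t u) = integral (cbox 0 pi) (\<lambda>t. integral (cbox 0 (2 * pi)) (\<lambda>u. Pt t u))"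
      using integral_prod_continuous[OF cPt] by simp
    also have "\<dots> = integral (cbox 0 (2 * pi)) (\<lambda>u. integral (cbox 0 pi) (\<lambda>t. Pt t u))"
      by (rule integral_swap_continuous) (use cPt in simp)
    also have "\<dots> = integral (cbox 0 (2 * pi)) (\<lambda>u. 0)"
    proof (rule integral_cong)
      fix u assume u: "u \<in> cbox 0 (2 * pi)"
      have "((\<lambda>t. Pt t u) has_integral (P pi u - P 0 u)) {0..pi}"
        by (rule fundamental_theorem_of_calculus) (use u dP in auto)
      then show "integral (cbox 0 pi) (\<lambda>t. Pt t u) = 0" using bP u by (simp add: integral_unique)
    qed
    finally show ?thesis by simp
  qed
  also have "integral ?B (\<lambda>(t,u). Qp t u) = 0"
  proof -
    have "integral ?B (\<lambda>(t,u). Qp t u) = integral (cbox 0 pi) (\<lambda>t. integral (cbox 0 (2 * pi)) (\<lambda>u. Qp t u))"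
      using integral_prod_continuous[OF cQp] by simp
    also have "\<dots> = integral (cbox 0 pi) (\<lambda>t. 0)"
    proof (rule integral_cong)
      fix t assume t: "t \<in> cbox 0 pi"
      have "((\<lambda>u. Qp t u) has_integral (Q t (2 * pi) - Q t 0)) {0..2 * pi}"
        by (rule fundamental_theorem_of_calculus) (use t dQ in auto)
      then show "integral (cbox 0 (2 * pi)) (\<lambda>u. Qp t u) = 0" using bQ t by (simp add: integral_unique)
    qed
    finally show ?thesis by simp
  qed
  finally show ?thesis by simp
qed
definition dotp :: "real \<Rightarrow> real \<Rightarrow> real \<Rightarrow> real \<Rightarrow> real \<Rightarrow> real" where
  "dotp a1 a2 a3 t u = a1 * sin t * cos u + a2 * sin t * sin u + a3 * cos t"

lemma norm_sphcoords: "(r * sin a * cos b)^2 + (r * sin a * sin b)^2 + (r * cos a)^2 = (r::real)^2"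
proof -
  have e: "(cos b)^2 = 1 - (sin b)^2" "(cos a)^2 = 1 - (sin a)^2" by (simp_all add: cos_squared_eq)
  show ?thesis by (simp add: power_mult_distrib e algebra_simps)
qed

lemma cs3: "(x1 * y1 + x2 * y2 + x3 * y3)^2 \<le> (x1^2 + x2^2 + x3^2) * (y1^2 + y2^2 + (y3::real)^2)"
proof -
  have "(x1^2 + x2^2 + x3^2) * (y1^2 + y2^2 + y3^2) - (x1 * y1 + x2 * y2 + x3 * y3)^2
     = (x1 * y2 - x2 * y1)^2 + (x1 * y3 - x3 * y1)^2 + (x2 * y3 - x3 * y2)^2"
    by algebra
  moreover have "(x1 * y2 - x2 * y1)^2 + (x1 * y3 - x3 * y1)^2 + (x2 * y3 - x3 * y2)^2 \<ge> 0" by simp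
  ultimately show ?thesis by linarith
qed

lemma dotp_bound:
  assumes "a1^2+a2^2+a3^2 = r^2" "0 \<le> r"
  shows "dotp a1 a2 a3 t u \<in> {-r..r}"
proof -
  have s: "(sin t * cos u)^2 + (sin t * sin u)^2 + (cos t)^2 = 1"
    using norm_sphcoords[of 1 t u] by (simp add: mult.commute)
  have "(dotp a1 a2 a3 t u)^2 \<le> (a1^2+a2^2+a3^2)*((sin t * cos u)^2 + (sin t * sin u)^2 + (cos t)^2)"
    using cs3[of a1 "sin t * cos u" a2 "sin t * sin u" a3 "cos t"] unfolding dotp_def by (simp add: mult.assoc)
  then have "(dotp a1 a2 a3 t u)^2 \<le> r^2" using s assms by simp
  then have "\<bar>dotp a1 a2 a3 t u\<bar> \<le> r" using assms(2) power2_le_iff_abs_le by blast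
  then show ?thesis by auto
qed

context
  fixes F F' :: "real \<Rightarrow> 'a::euclidean_space" and r :: real
  assumes r: "r > 0"
  and dF: "\<And>c. c \<in> {-r..r} \<Longrightarrow> (F has_vector_derivative F' c) (at c)"
  and cF': "continuous_on {-r..r} F'"
begin

lemma cF: "continuous_on {-r..r} F"
  using dF has_vector_derivative_continuous continuous_at_imp_continuous_on by blast

lemma cF_comp: "continuous_on S g \<Longrightarrow> (\<And>x. x\<in>S \<Longrightarrow> g x \<in> {-r..r}) \<Longrightarrow> continuous_on S (\<lambda>x. F (g x))"
  by (rule continuous_on_compose2[OF cF]) auto

lemma cF'_comp: "continuous_on S g \<Longrightarrow> (\<And>x. x\<in>S \<Longrightarrow> g x \<in> {-r..r}) \<Longrightarrow> continuous_on S (\<lambda>x. F' (g x))"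
  by (rule continuous_on_compose2[OF cF']) auto

lemma chainF:
  assumes "(g has_real_derivative g') (at x within S)" "(h has_real_derivative h') (at x within S)"
    "g x \<in> {-r..r}"
  shows "((\<lambda>x. h x *\<^sub>R F (g x)) has_vector_derivative ((h x * g') *\<^sub>R F' (g x) + h' *\<^sub>R F (g x))) (at x within S)"
proof -
  have g: "(g has_vector_derivative g') (at x within S)"
    using assms(1) has_real_derivative_iff_has_vector_derivative by blast
  have "(F has_vector_derivative F' (g x)) (at (g x) within g ` S)"
    using dF[OF assms(3)] has_vector_derivative_at_within by blast
  from vector_diff_chain_within[OF g this]
  have "((\<lambda>x. F (g x)) has_vector_derivative (g' *\<^sub>R F' (g x))) (at x within S)"
    by (simp add: o_def)
  from has_vector_derivative_scaleR[OF assms(2) this]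
  show ?thesis by (simp add: algebra_simps)
qed

definition Ig :: "real \<Rightarrow> real \<Rightarrow> real \<Rightarrow> 'a" where
  "Ig a1 a2 a3 = integral (cbox (0,0) (pi,2 * pi)) (\<lambda>p. sin (fst p) *\<^sub>R F (dotp a1 a2 a3 (fst p) (snd p)))"


lemma cont_dotp: "continuous_on (S::(real*real) set) (\<lambda>p. dotp a1 a2 a3 (fst p) (snd p))"
  unfolding dotp_def by (intro continuous_intros)

lemma cont_integrand:
  assumes "a1^2+a2^2+a3^2 = r^2"
  shows "continuous_on (S::(real*real) set) (\<lambda>p. sin (fst p) *\<^sub>R F (dotp a1 a2 a3 (fst p) (snd p)))"
proof -
  have rng: "\<And>t u. -r \<le> dotp a1 a2 a3 t u \<and> dotp a1 a2 a3 t u \<le> r" using dotp_bound[OF assms] r by simp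
  have "continuous_on S (\<lambda>p. F (dotp a1 a2 a3 (fst p) (snd p)))"
    by (rule cF_comp[OF cont_dotp]) (auto intro!: continuous_intros simp: rng)
  then show ?thesis by (intro continuous_intros)
qed

lemma cont_Fd:
  assumes "b1^2+b2^2+b3^2 = r^2"
  shows "continuous_on (S::(real*real) set) (\<lambda>p. F (dotp b1 b2 b3 (fst p) (snd p)))"
proof -
  have rng: "\<And>t u. -r \<le> dotp b1 b2 b3 t u \<and> dotp b1 b2 b3 t u \<le> r" using dotp_bound[OF assms] r by simp
  show ?thesis by (rule cF_comp[OF cont_dotp]) (auto intro!: continuous_intros simp: rng)
qed

lemma cont_F'd:
  assumes "b1^2+b2^2+b3^2 = r^2"
  shows "continuous_on (S::(real*real) set) (\<lambda>p. F' (dotp b1 b2 b3 (fst p) (snd p)))"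
proof -
  have rng: "\<And>t u. -r \<le> dotp b1 b2 b3 t u \<and> dotp b1 b2 b3 t u \<le> r" using dotp_bound[OF assms] r by simp
  show ?thesis by (rule cF'_comp[OF cont_dotp]) (auto intro!: continuous_intros simp: rng)
qed

lemma zrot:
  assumes b: "b1^2+b2^2+b3^2 = r^2"
  shows "integral (cbox (0,0) (pi,2*pi)) (\<lambda>p. (sin (fst p) * (- b2 * sin (fst p) * cos (snd p) + b1 * sin (fst p) * sin (snd p))) *\<^sub>R F' (dotp b1 b2 b3 (fst p) (snd p))) = 0"
proof -
  have rng: "\<And>t u. dotp b1 b2 b3 t u \<in> {-r..r}" using dotp_bound[OF b] r by simp
  have "integral (cbox (0,0) (pi,2*pi)) (\<lambda>(t,u). (\<lambda>t u. 0::'a) t u + (\<lambda>t u. (sin t * (- b2 * sin t * cos u + b1 * sin t * sin u)) *\<^sub>R F' (dotp b1 b2 b3 t u)) t u) = 0"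
  proof (rule div_zero[where P="\<lambda>t u. 0" and Q="\<lambda>t u. - sin t *\<^sub>R F (dotp b1 b2 b3 t u)"])
    show "continuous_on (cbox (0, 0) (pi, 2 * pi)) (\<lambda>(t, u). 0::'a)" by simp
    show "continuous_on (cbox (0, 0) (pi, 2 * pi)) (\<lambda>(t, u). (sin t * (- b2 * sin t * cos u + b1 * sin t * sin u)) *\<^sub>R F' (dotp b1 b2 b3 t u))"
      unfolding split_def by (intro continuous_intros cont_F'd[OF b])
    show "((\<lambda>t. 0::'a) has_vector_derivative 0) (at t within {0..pi})" for t u by simp
    show "((\<lambda>u. - sin t *\<^sub>R F (dotp b1 b2 b3 t u)) has_vector_derivative (sin t * (- b2 * sin t * cos u + b1 * sin t * sin u)) *\<^sub>R F' (dotp b1 b2 b3 t u)) (at u within {0..2*pi})" for t u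
    proof -
      have g: "((\<lambda>u. dotp b1 b2 b3 t u) has_real_derivative (- b1 * sin t * sin u + b2 * sin t * cos u)) (at u within {0..2*pi})"
        unfolding dotp_def by (auto intro!: derivative_eq_intros)
      have h: "((\<lambda>u. - sin t) has_real_derivative 0) (at u within {0..2*pi})" by simp
      from chainF[OF g h rng] show ?thesis by (simp add: algebra_simps)
    qed
    show "0 = (0::'a)" for u by simp
    show "- sin t *\<^sub>R F (dotp b1 b2 b3 t (2 * pi)) = - sin t *\<^sub>R F (dotp b1 b2 b3 t 0)" for t
      by (simp add: dotp_def)
  qed
  then show ?thesis by (simp add: split_def)
qed


lemma yrot:
  assumes b: "b1^2+b3^2 = r^2"
  shows "integral (cbox (0,0) (pi,2*pi)) (\<lambda>p. (sin (fst p) * (b3 * sin (fst p) * cos (snd p) - b1 * cos (fst p))) *\<^sub>R F' (dotp b1 0 b3 (fst p) (snd p))) = 0"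
proof -
  have b': "b1^2+0^2+b3^2 = r^2" using b by simp
  have rng: "\<And>t u. dotp b1 0 b3 t u \<in> {-r..r}" using dotp_bound[OF b'] r by simp
  define Pt where "Pt t u = (- (sin t * cos u) * (b1 * cos t * cos u - b3 * sin t)) *\<^sub>R F' (dotp b1 0 b3 t u) + (- (cos t * cos u)) *\<^sub>R F (dotp b1 0 b3 t u)" for t u
  define Qp where "Qp t u = (cos t * sin u * (- b1 * sin t * sin u)) *\<^sub>R F' (dotp b1 0 b3 t u) + (cos t * cos u) *\<^sub>R F (dotp b1 0 b3 t u)" for t u
  have eq: "Pt t u + Qp t u = (sin t * (b3 * sin t * cos u - b1 * cos t)) *\<^sub>R F' (dotp b1 0 b3 t u)" for t u
  proof -
    have c: "- (sin t * cos u) * (b1 * cos t * cos u - b3 * sin t) + cos t * sin u * (- b1 * sin t * sin u)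
        = sin t * (b3 * sin t * cos u - b1 * cos t)"
    proof -
      have e: "sin u * sin u = 1 - cos u * cos u"
        using sin_cos_squared_add[of u] by (simp add: power2_eq_square)
      show ?thesis by (simp add: e algebra_simps)
    qed
    have "Pt t u + Qp t u = (- (sin t * cos u) * (b1 * cos t * cos u - b3 * sin t) + cos t * sin u * (- b1 * sin t * sin u)) *\<^sub>R F' (dotp b1 0 b3 t u)"
      unfolding Pt_def Qp_def by (simp add: algebra_simps)
    then show ?thesis using c by simp
  qed
  have "integral (cbox (0,0) (pi,2*pi)) (\<lambda>(t,u). Pt t u + Qp t u) = 0"
  proof (rule div_zero[where P="\<lambda>t u. - (sin t * cos u) *\<^sub>R F (dotp b1 0 b3 t u)" and Q="\<lambda>t u. (cos t * sin u) *\<^sub>R F (dotp b1 0 b3 t u)"])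
    show "continuous_on (cbox (0, 0) (pi, 2 * pi)) (\<lambda>(t, u). Pt t u)"
      unfolding split_def Pt_def by (intro continuous_intros cont_F'd[OF b'] cont_Fd[OF b'])
    show "continuous_on (cbox (0, 0) (pi, 2 * pi)) (\<lambda>(t, u). Qp t u)"
      unfolding split_def Qp_def by (intro continuous_intros cont_F'd[OF b'] cont_Fd[OF b'])
    show "((\<lambda>t. - (sin t * cos u) *\<^sub>R F (dotp b1 0 b3 t u)) has_vector_derivative Pt t u) (at t within {0..pi})" for t u
    proof -
      have g: "((\<lambda>t. dotp b1 0 b3 t u) has_real_derivative (b1 * cos t * cos u - b3 * sin t)) (at t within {0..pi})"
        unfolding dotp_def by (auto intro!: derivative_eq_intros)
      have h: "((\<lambda>t. - (sin t * cos u)) has_real_derivative (- (cos t * cos u))) (at t within {0..pi})"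
        by (auto intro!: derivative_eq_intros)
      from chainF[OF g h rng] show ?thesis by (simp add: Pt_def)
    qed
    show "((\<lambda>u. (cos t * sin u) *\<^sub>R F (dotp b1 0 b3 t u)) has_vector_derivative Qp t u) (at u within {0..2*pi})" for t u
    proof -
      have g: "((\<lambda>u. dotp b1 0 b3 t u) has_real_derivative (- b1 * sin t * sin u)) (at u within {0..2*pi})"
        unfolding dotp_def by (auto intro!: derivative_eq_intros)
      have h: "((\<lambda>u. cos t * sin u) has_real_derivative (cos t * cos u)) (at u within {0..2*pi})"
        by (auto intro!: derivative_eq_intros)
      from chainF[OF g h rng] show ?thesis by (simp add: Qp_def mult.assoc)
    qed
    show "- (sin pi * cos u) *\<^sub>R F (dotp b1 0 b3 pi u) = - (sin 0 * cos u) *\<^sub>R F (dotp b1 0 b3 0 u)" for u by simp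
    show "(cos t * sin (2*pi)) *\<^sub>R F (dotp b1 0 b3 t (2*pi)) = (cos t * sin 0) *\<^sub>R F (dotp b1 0 b3 t 0)" for t by simp
  qed
  then show ?thesis by (simp add: split_def eq)
qed

lemma Ig_deriv_beta:
  "((\<lambda>\<beta>. Ig (r * sin \<alpha> * cos \<beta>) (r * sin \<alpha> * sin \<beta>) (r * cos \<alpha>)) has_vector_derivative 0) (at \<beta>)"
proof -
  define f where "f \<beta> p = sin (fst p) *\<^sub>R F (dotp (r * sin \<alpha> * cos \<beta>) (r * sin \<alpha> * sin \<beta>) (r * cos \<alpha>) (fst p) (snd p))" for \<beta> p
  define fx where "fx \<beta> p = (sin (fst p) * (- (r * sin \<alpha> * sin \<beta>) * sin (fst p) * cos (snd p) + (r * sin \<alpha> * cos \<beta>) * sin (fst p) * sin (snd p))) *\<^sub>R F' (dotp (r * sin \<alpha> * cos \<beta>) (r * sin \<alpha> * sin \<beta>) (r * cos \<alpha>) (fst p) (snd p))" for \<beta> p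
  have nb: "\<And>\<beta>. (r * sin \<alpha> * cos \<beta>)^2 + (r * sin \<alpha> * sin \<beta>)^2 + (r * cos \<alpha>)^2 = r^2" by (rule norm_sphcoords)
  have rng: "\<And>\<beta> t u. -r \<le> dotp (r * sin \<alpha> * cos \<beta>) (r * sin \<alpha> * sin \<beta>) (r * cos \<alpha>) t u \<and> dotp (r * sin \<alpha> * cos \<beta>) (r * sin \<alpha> * sin \<beta>) (r * cos \<alpha>) t u \<le> r"
    using dotp_bound[OF nb] r by simp
  have "((\<lambda>\<beta>. integral (cbox (0,0) (pi,2*pi)) (f \<beta>)) has_vector_derivative integral (cbox (0,0) (pi,2*pi)) (fx \<beta>)) (at \<beta> within UNIV)"
  proof (rule leibniz_rule_vector_derivative)
    fix \<beta> :: real and p :: "real \<times> real"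
    have g: "((\<lambda>\<beta>. dotp (r * sin \<alpha> * cos \<beta>) (r * sin \<alpha> * sin \<beta>) (r * cos \<alpha>) (fst p) (snd p)) has_real_derivative
       (- (r * sin \<alpha> * sin \<beta>) * sin (fst p) * cos (snd p) + (r * sin \<alpha> * cos \<beta>) * sin (fst p) * sin (snd p))) (at \<beta> within UNIV)"
      unfolding dotp_def by (auto intro!: derivative_eq_intros simp: algebra_simps)
    have h: "((\<lambda>\<beta>. sin (fst p)) has_real_derivative 0) (at \<beta> within UNIV)" by simp
    from chainF[OF g h] rng
    show "((\<lambda>\<beta>. f \<beta> p) has_vector_derivative fx \<beta> p) (at \<beta> within UNIV)"
      by (simp add: f_def fx_def)
  next
    show "f \<beta> integrable_on cbox (0,0) (pi,2*pi)" for \<beta>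
      unfolding f_def by (rule integrable_continuous[OF cont_integrand[OF nb]])
  next
    have c: "continuous_on (UNIV \<times> cbox (0,0) (pi,2*pi)) (\<lambda>x. F' (dotp (r * sin \<alpha> * cos (fst x)) (r * sin \<alpha> * sin (fst x)) (r * cos \<alpha>) (fst (snd x)) (snd (snd x))))"
      by (rule cF'_comp) (auto simp: dotp_def rng[unfolded dotp_def] intro!: continuous_intros)
    show "continuous_on (UNIV \<times> cbox (0,0) (pi,2*pi)) (\<lambda>(\<beta>,p). fx \<beta> p)"
      unfolding fx_def split_def by (intro continuous_intros c)
  qed auto
  moreover have "integral (cbox (0,0) (pi,2*pi)) (fx \<beta>) = 0"
    unfolding fx_def by (rule zrot[OF nb])
  ultimately show ?thesis unfolding Ig_def f_def by simp
qed

lemma Ig_deriv_alpha: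
  "((\<lambda>\<alpha>. Ig (r * sin \<alpha>) 0 (r * cos \<alpha>)) has_vector_derivative 0) (at \<alpha>)"
proof -
  define f where "f \<alpha> p = sin (fst p) *\<^sub>R F (dotp (r * sin \<alpha>) 0 (r * cos \<alpha>) (fst p) (snd p))" for \<alpha> p
  define fx where "fx \<alpha> p = (sin (fst p) * ((r * cos \<alpha>) * sin (fst p) * cos (snd p) - (r * sin \<alpha>) * cos (fst p))) *\<^sub>R F' (dotp (r * sin \<alpha>) 0 (r * cos \<alpha>) (fst p) (snd p))" for \<alpha> p
  have nb2: "\<And>\<alpha>. (r * sin \<alpha>)^2 + (r * cos \<alpha>)^2 = r^2"
    using norm_sphcoords[of r _ 0] by simp
  have nb: "\<And>\<alpha>. (r * sin \<alpha>)^2 + 0^2 + (r * cos \<alpha>)^2 = r^2" using nb2 by simp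
  have rng: "\<And>\<alpha> t u. -r \<le> dotp (r * sin \<alpha>) 0 (r * cos \<alpha>) t u \<and> dotp (r * sin \<alpha>) 0 (r * cos \<alpha>) t u \<le> r"
    using dotp_bound[OF nb] r by simp
  have "((\<lambda>\<alpha>. integral (cbox (0,0) (pi,2*pi)) (f \<alpha>)) has_vector_derivative integral (cbox (0,0) (pi,2*pi)) (fx \<alpha>)) (at \<alpha> within UNIV)"
  proof (rule leibniz_rule_vector_derivative)
    fix \<alpha> :: real and p :: "real \<times> real"
    have g: "((\<lambda>\<alpha>. dotp (r * sin \<alpha>) 0 (r * cos \<alpha>) (fst p) (snd p)) has_real_derivative
       ((r * cos \<alpha>) * sin (fst p) * cos (snd p) - (r * sin \<alpha>) * cos (fst p))) (at \<alpha> within UNIV)"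
      unfolding dotp_def by (auto intro!: derivative_eq_intros simp: algebra_simps)
    have h: "((\<lambda>\<alpha>. sin (fst p)) has_real_derivative 0) (at \<alpha> within UNIV)" by simp
    from chainF[OF g h] rng
    show "((\<lambda>\<alpha>. f \<alpha> p) has_vector_derivative fx \<alpha> p) (at \<alpha> within UNIV)"
      by (simp add: f_def fx_def)
  next
    show "f \<alpha> integrable_on cbox (0,0) (pi,2*pi)" for \<alpha>
      unfolding f_def by (rule integrable_continuous[OF cont_integrand[OF nb]])
  next
    have c: "continuous_on (UNIV \<times> cbox (0,0) (pi,2*pi)) (\<lambda>x. F' (dotp (r * sin (fst x)) 0 (r * cos (fst x)) (fst (snd x)) (snd (snd x))))"
      by (rule cF'_comp) (auto simp: dotp_def rng[unfolded dotp_def, simplified] intro!: continuous_intros)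
    show "continuous_on (UNIV \<times> cbox (0,0) (pi,2*pi)) (\<lambda>(\<alpha>,p). fx \<alpha> p)"
      unfolding fx_def split_def by (intro continuous_intros c)
  qed auto
  moreover have "integral (cbox (0,0) (pi,2*pi)) (fx \<alpha>) = 0"
    unfolding fx_def by (rule yrot[OF nb2])
  ultimately show ?thesis unfolding Ig_def f_def by simp
qed

lemma const_of_deriv0:
  fixes K :: "real \<Rightarrow> 'b::real_normed_vector"
  assumes "\<And>x. (K has_vector_derivative 0) (at x)"
  shows "K x = K y"
proof -
  have "\<exists>c. \<forall>x\<in>UNIV. K x = c"
    by (rule has_derivative_zero_constant[of UNIV]) (use assms in \<open>auto simp: has_vector_derivative_def\<close>)
  then show ?thesis by auto
qed

lemma Ig_const:
  assumes a: "a1^2+a2^2+a3^2 = r^2"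
  shows "Ig a1 a2 a3 = Ig 0 0 r"
proof -
  define \<rho> where "\<rho> = sqrt (a1^2+a2^2)"
  have \<rho>2: "\<rho>^2 = a1^2+a2^2" unfolding \<rho>_def by simp
  have "(a3/r)^2 + (\<rho>/r)^2 = 1" using a r \<rho>2 by (simp add: power_divide field_simps)
  then obtain \<alpha> where \<alpha>: "a3/r = cos \<alpha>" "\<rho>/r = sin \<alpha>" by (rule sincos_total_2pi) auto
  obtain \<beta> where \<beta>: "a1 = r * sin \<alpha> * cos \<beta>" "a2 = r * sin \<alpha> * sin \<beta>"
  proof (cases "\<rho> = 0")
    case True
    then have "a1 = 0" "a2 = 0" using \<rho>2 by (simp_all add: power2_eq_square)
    then show ?thesis using that[of 0] True \<alpha> r by auto
  next
    case False
    moreover have "\<rho> \<ge> 0" unfolding \<rho>_def by simp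
    ultimately have "\<rho> > 0" by simp
    have "(a1/\<rho>)^2 + (a2/\<rho>)^2 = (a1^2 + a2^2)/\<rho>^2" by (simp add: power_divide add_divide_distrib)
    also have "\<dots> = 1" unfolding \<rho>2[symmetric] using \<open>\<rho> > 0\<close> by simp
    finally have "(a1/\<rho>)^2 + (a2/\<rho>)^2 = 1" .
    then obtain \<beta> where "a1/\<rho> = cos \<beta>" "a2/\<rho> = sin \<beta>" by (rule sincos_total_2pi) auto
    moreover have "r * sin \<alpha> = \<rho>" using \<alpha> r by (simp add: field_simps)
    ultimately show ?thesis using that[of \<beta>] \<open>\<rho> > 0\<close> by (simp add: field_simps)
  qed
  have a3: "a3 = r * cos \<alpha>" using \<alpha> r by (simp add: field_simps)
  have "Ig a1 a2 a3 = Ig (r * sin \<alpha> * cos 0) (r * sin \<alpha> * sin 0) (r * cos \<alpha>)"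
    unfolding \<beta> a3 by (rule const_of_deriv0[OF Ig_deriv_beta])
  also have "\<dots> = Ig (r * sin \<alpha>) 0 (r * cos \<alpha>)" by simp
  also have "\<dots> = Ig (r * sin 0) 0 (r * cos 0)" by (rule const_of_deriv0[OF Ig_deriv_alpha])
  finally show ?thesis by simp
qed

lemma pole_1d:
  assumes G: "\<And>c. c \<in> {-r..r} \<Longrightarrow> (G has_vector_derivative F c) (at c within {-r..r})"
  shows "((\<lambda>t. sin t *\<^sub>R F (r * cos t)) has_integral ((1/r) *\<^sub>R (G r - G (-r)))) {0..pi}"
proof -
  have "((\<lambda>t. sin t *\<^sub>R F (r * cos t)) has_integral ((-1/r) *\<^sub>R G (r * cos pi) - (-1/r) *\<^sub>R G (r * cos 0))) {0..pi}"
  proof (rule fundamental_theorem_of_calculus[where f="\<lambda>t. (-1/r) *\<^sub>R G (r * cos t)"])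
    fix t assume t: "t \<in> {0..pi}"
    have g: "((\<lambda>t. r * cos t) has_vector_derivative (- r * sin t)) (at t within {0..pi})"
      unfolding has_real_derivative_iff_has_vector_derivative[symmetric]
      by (auto intro!: derivative_eq_intros)
    have rcb: "r * cos t' \<in> {-r..r}" for t'
    proof -
      have "r * (-1) \<le> r * cos t'" by (rule mult_left_mono) (use r in auto)
      moreover have "r * cos t' \<le> r * 1" by (rule mult_left_mono) (use r in auto)
      ultimately show ?thesis by simp
    qed
    have rc: "r * cos t \<in> {-r..r}" by (rule rcb)
    have sub: "(\<lambda>t. r * cos t) ` {0..pi} \<subseteq> {-r..r}" using rcb by auto
    have "(G has_vector_derivative F (r * cos t)) (at (r * cos t) within (\<lambda>t. r * cos t) ` {0..pi})"
      by (rule has_vector_derivative_within_subset[OF G[OF rc] sub])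
    from vector_diff_chain_within[OF g this]
    have d: "((\<lambda>t. G (r * cos t)) has_vector_derivative ((- r * sin t) *\<^sub>R F (r * cos t))) (at t within {0..pi})"
      by (simp add: o_def)
    have c: "((\<lambda>t. -1/r) has_field_derivative 0) (at t within {0..pi})" by simp
    from has_vector_derivative_scaleR[OF c d] r
    show "((\<lambda>t. (-1/r) *\<^sub>R G (r * cos t)) has_vector_derivative sin t *\<^sub>R F (r * cos t)) (at t within {0..pi})"
      by simp
  qed simp
  then show ?thesis by (simp add: algebra_simps)
qed

lemma Ig_pole:
  assumes G: "\<And>c. c \<in> {-r..r} \<Longrightarrow> (G has_vector_derivative F c) (at c within {-r..r})"
  shows "Ig 0 0 r = (2*pi/r) *\<^sub>R (G r - G (-r))"
proof -
  have nb: "0^2+0^2+r^2 = r^2" by simp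
  have "Ig 0 0 r = integral (cbox 0 pi) (\<lambda>t. integral (cbox 0 (2*pi)) (\<lambda>u. sin (fst (t,u)) *\<^sub>R F (dotp 0 0 r (fst (t,u)) (snd (t,u)))))"
    unfolding Ig_def by (rule integral_prod_continuous[OF cont_integrand[OF nb]])
  also have "\<dots> = integral {0..pi} (\<lambda>t. (2*pi) *\<^sub>R (sin t *\<^sub>R F (r * cos t)))"
    by (simp add: dotp_def mult.commute)
  also have "\<dots> = (2*pi) *\<^sub>R integral {0..pi} (\<lambda>t. sin t *\<^sub>R F (r * cos t))" by (rule integral_cmul)
  also have "\<dots> = (2*pi) *\<^sub>R ((1/r) *\<^sub>R (G r - G (-r)))"
    using pole_1d[OF G] by (simp add: integral_unique)
  finally show ?thesis by simp
qed

lemma arch: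
  fixes x :: "real^3"
  assumes G: "\<And>c. c \<in> {-r..r} \<Longrightarrow> (G has_vector_derivative F c) (at c within {-r..r})"
    and x: "norm x = r"
  shows "((\<lambda>p. sin (fst p) *\<^sub>R F (inner x (sph 1 p))) has_integral ((2*pi/r) *\<^sub>R (G r - G (-r)))) (cbox (0,0) (pi,2*pi))"
proof -
  have ip: "inner x (sph 1 p) = dotp (x$1) (x$2) (x$3) (fst p) (snd p)" for p
    unfolding inner_vec_def sum_3 sph_def dotp_def by (simp add: algebra_simps)
  have nb: "(x$1)^2 + (x$2)^2 + (x$3)^2 = r^2"
    using power2_norm_eq_inner[of x] x unfolding inner_vec_def sum_3 by (simp add: power2_eq_square)
  have "((\<lambda>p. sin (fst p) *\<^sub>R F (dotp (x$1) (x$2) (x$3) (fst p) (snd p))) has_integral Ig (x$1) (x$2) (x$3)) (cbox (0,0) (pi,2*pi))"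
    unfolding Ig_def by (rule integrable_integral[OF integrable_continuous[OF cont_integrand[OF nb]]])
  then show ?thesis unfolding ip by (simp only: Ig_const[OF nb] Ig_pole[OF G])
qed

end




lemma sphere_reduce:
  fixes x :: "real^3" and F F' G :: "real \<Rightarrow> 'a::euclidean_space" and f :: "real^3 \<Rightarrow> 'a"
  assumes r: "norm x > 0"
  and dF: "\<And>c. c \<in> {-norm x..norm x} \<Longrightarrow> (F has_vector_derivative F' c) (at c)"
  and cF': "continuous_on {-norm x..norm x} F'"
  and G: "\<And>c. c \<in> {-norm x..norm x} \<Longrightarrow> (G has_vector_derivative F c) (at c within {-norm x..norm x})"
  and f: "\<And>p. f (sph R p) = F (inner x (sph 1 p))"
  shows "has_sphere_integral f ((R^2 * (2*pi/norm x)) *\<^sub>R (G (norm x) - G (- norm x))) R"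
proof -
  have "((\<lambda>p. sin (fst p) *\<^sub>R F (inner x (sph 1 p))) has_integral ((2*pi/norm x) *\<^sub>R (G (norm x) - G (- norm x)))) (cbox (0,0) (pi,2*pi))"
    by (rule arch[OF r dF cF' G refl])
  from has_integral_cmul[OF this, of "R^2"]
  show ?thesis unfolding has_sphere_integral_def f by (simp add: scaleR_scaleR)
qed

lemma sph_scale: "sph R p = R *\<^sub>R sph 1 p"
  unfolding sph_def by (simp add: vec_eq_iff forall_3 vector_3)

lemma norm_sph1: "norm (sph 1 p) = 1"
proof -
  have "(norm (sph 1 p))^2 = 1"
    unfolding power2_norm_eq_inner inner_vec_def sum_3 sph_def
    using norm_sphcoords[of 1 "fst p" "snd p"] by (simp add: power2_eq_square)
  then show ?thesis using norm_ge_zero[of "sph 1 p"] by (auto simp: power2_eq_1_iff)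
qed


lemma omega_sph:
  fixes x :: "real^3"
  assumes R: "R > 0" and "norm x \<noteq> R"
  shows "omega x (sph R p) = \<bar>R^2 - (norm x)^2\<bar> / ((norm x)^2 + R^2 - 2 * R * inner x (sph 1 p))"
    and "inner x (sph 1 p) \<in> {-norm x..norm x}"
proof -
  have ns: "norm (sph R p) = R" using R by (simp add: sph_scale[of R p] norm_sph1)
  have i1: "inner (sph 1 p) (sph 1 p) = 1" using norm_sph1[of p] by (simp add: power2_norm_eq_inner[symmetric])
  have "(norm (x - sph R p))^2 = inner (x - R *\<^sub>R sph 1 p) (x - R *\<^sub>R sph 1 p)"
    unfolding sph_scale[of R p] by (rule power2_norm_eq_inner)
  also have "\<dots> = inner x x - 2 * R * inner x (sph 1 p) + R^2 * inner (sph 1 p) (sph 1 p)"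
    by (simp add: inner_diff_left inner_diff_right inner_commute power2_eq_square algebra_simps)
  also have "\<dots> = (norm x)^2 + R^2 - 2 * R * inner x (sph 1 p)"
    by (simp add: i1 power2_norm_eq_inner)
  finally have nd: "(norm (x - sph R p))^2 = (norm x)^2 + R^2 - 2 * R * inner x (sph 1 p)" .
  moreover have "x \<noteq> sph R p" using ns assms(2) by auto
  then have "0 < (norm (x - sph R p))^2" by simp
  ultimately have pos: "(norm x)^2 + R^2 - 2 * R * inner x (sph 1 p) > 0" by linarith
  show "omega x (sph R p) = \<bar>R^2 - (norm x)^2\<bar> / ((norm x)^2 + R^2 - 2 * R * inner x (sph 1 p))"
    unfolding omega_def ns nd using pos by (simp add: abs_minus_commute abs_divide)
  have "\<bar>inner x (sph 1 p)\<bar> \<le> norm x" using Cauchy_Schwarz_ineq2[of x "sph 1 p"] norm_sph1[of p] by simp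
  then show "inner x (sph 1 p) \<in> {-norm x..norm x}" by auto
qed


lemma expz: "a > 0 \<Longrightarrow> exp (Complex 1 b * of_real (ln a)) = of_real a * cis (b * ln a)"
proof -
  assume a: "a > 0"
  have "Complex 1 b * of_real (ln a) = Complex (ln a) (b * ln a)" by (simp add: complex_eq_iff)
  then show ?thesis using a by (simp add: exp_eq_polar)
qed

theorem corollary5:
  fixes R b :: real and x :: "real^3"
  assumes "R > 0" and "norm x > 0" and "norm x \<noteq> R" and "b \<noteq> 0"
  shows "has_sphere_integral (omega_cpow b x)
           (of_real ((2 * pi * R / norm x) * (\<bar>R^2 - (norm x)^2\<bar> / b) *
              sin (b * ln ((R + norm x) / \<bar>R - norm x\<bar>)))) R
         \<and> has_sphere_integral (omega x)
           ((2 * pi * R / norm x) * \<bar>R^2 - (norm x)^2\<bar> *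
              ln ((R + norm x) / \<bar>R - norm x\<bar>)) R"
proof -
  define r where "r = norm x"
  define k where "k = \<bar>R^2 - r^2\<bar>"
  define D where "D c = r^2 + R^2 - 2 * R * c" for c
  define L where "L = ln ((R + r) / \<bar>R - r\<bar>)"
  have R: "R > 0" and r: "r > 0" and rR: "r \<noteq> R" using assms by (auto simp: r_def)
  have kf: "k = \<bar>R - r\<bar> * (R + r)"
  proof -
    have "R^2 - r^2 = (R - r) * (R + r)" by (simp add: power2_eq_square algebra_simps)
    then show ?thesis unfolding k_def using R r by (simp add: abs_mult)
  qed
  have k: "k > 0" using kf R r rR by simp
  have Dpos: "D c > 0" if "c \<in> {-r..r}" for c
  proof -
    have "D c - (R - r)^2 = 2 * R * (r - c)" unfolding D_def by (simp add: power2_eq_square algebra_simps)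
    moreover have "2 * R * (r - c) \<ge> 0" using that R by simp
    moreover have "(R - r)^2 > 0" using rR by simp
    ultimately show ?thesis by linarith
  qed
  have Dr: "D r = \<bar>R - r\<bar>^2" and Dmr: "D (-r) = (R + r)^2" unfolding D_def by (simp_all add: power2_eq_square algebra_simps)
  have om: "omega x (sph R p) = k / D (inner x (sph 1 p))" for p
    using omega_sph(1)[OF R assms(3)] unfolding k_def D_def r_def .
  have rng: "inner x (sph 1 p) \<in> {-r..r}" for p
    using omega_sph(2)[OF R assms(3)] unfolding r_def .
  have L_eq: "L = ln (R + r) - ln \<bar>R - r\<bar>" unfolding L_def using R r rR by (simp add: ln_div)
  define F1 where "F1 c = k / D c" for c
  define F1' where "F1' c = 2 * R * k / (D c)^2" for c
  define G1 where "G1 c = - (k / (2 * R)) * ln (D c)" for c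
  have dF1: "(F1 has_real_derivative F1' c) (at c)" if "c \<in> {-r..r}" for c
  proof -
    have "D c \<noteq> 0" using Dpos[OF that] by simp
    then show ?thesis unfolding F1_def F1'_def D_def
      by (auto intro!: derivative_eq_intros simp: power2_eq_square field_simps)
  qed
  have part2: "has_sphere_integral (omega x) ((R^2 * (2*pi/r)) *\<^sub>R (G1 r - G1 (-r))) R"
  proof (rule sphere_reduce[where x=x and F=F1 and F'=F1', folded r_def])
    show "0 < r" by (rule r)
    show "(F1 has_vector_derivative F1' c) (at c)" if "c \<in> {-r..r}" for c
      using dF1[OF that] has_real_derivative_iff_has_vector_derivative by blast
    show "continuous_on {-r..r} F1'"
    proof -
      have nz: "\<And>c. c \<in> {-r..r} \<Longrightarrow> (r^2 + R^2 - 2 * R * c)^2 \<noteq> 0" using Dpos unfolding D_def by force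
      show ?thesis unfolding F1'_def D_def by (intro continuous_intros) (use nz in auto)
    qed
    show "(G1 has_vector_derivative F1 c) (at c within {-r..r})" if "c \<in> {-r..r}" for c
    proof -
      have Dc: "D c > 0" using Dpos[OF that] by simp
      have dD: "(D has_real_derivative (-2*R)) (at c within {-r..r})" unfolding D_def by (auto intro!: derivative_eq_intros)
      have "((\<lambda>c. -(k/(2*R)) * ln (D c)) has_real_derivative (-(k/(2*R)) * (1/D c * (-2*R)))) (at c within {-r..r})"
        by (rule DERIV_cmult[OF DERIV_chain2[OF DERIV_ln_divide[OF Dc] dD]])
      moreover have "-(k/(2*R)) * (1/D c * (-2*R)) = F1 c" unfolding F1_def using R Dc by (simp add: field_simps)
      ultimately show ?thesis unfolding has_real_derivative_iff_has_vector_derivative[symmetric] G1_def by simp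
    qed
    show "omega x (sph R p) = F1 (inner x (sph 1 p))" for p unfolding F1_def om ..
  qed
  have val2: "(R^2 * (2*pi/r)) *\<^sub>R (G1 r - G1 (-r)) = (2 * pi * R / r) * k * L"
  proof -
    have "G1 r - G1 (-r) = (k / (2 * R)) * (ln ((R + r)^2) - ln (\<bar>R - r\<bar>^2))"
      unfolding G1_def Dr Dmr by (simp add: algebra_simps)
    also have "\<dots> = (k / R) * L" unfolding L_eq ln_realpow by (simp add: algebra_simps)
    finally have e: "G1 r - G1 (-r) = (k / R) * L" .
    show ?thesis unfolding e using R r by (simp add: power2_eq_square field_simps)
  qed
  define z where "z = Complex 1 b"
  define F2 where "F2 c = exp (z * of_real (ln (k / D c)))" for c
  define F2' where "F2' c = of_real (2 * R / D c) * (exp (z * of_real (ln (k / D c))) * z)" for c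
  define C where "C = 1 / (2 * \<i> * of_real R * of_real b :: complex)"
  define G2 where "G2 c = F2 c * of_real (D c) * C" for c
  have z1: "z = 1 + \<i> * of_real b" unfolding z_def by (simp add: complex_eq_iff)
  have dF2: "(F2 has_vector_derivative F2' c) (at c)" if c: "c \<in> {-r..r}" for c
  proof -
    have Dc: "D c > 0" using Dpos[OF c] .
    have kD: "k / D c > 0" using k Dc by simp
    have "((\<lambda>c. ln (F1 c)) has_real_derivative (1 / F1 c * F1' c)) (at c)"
      by (rule DERIV_chain2[OF DERIV_ln_divide dF1[OF c]]) (simp add: F1_def kD)
    moreover have "1 / F1 c * F1' c = 2 * R / D c" unfolding F1_def F1'_def using k Dc
      by (simp add: power2_eq_square field_simps)
    ultimately have dl: "((\<lambda>c. ln (k / D c)) has_real_derivative (2 * R / D c)) (at c)"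
      unfolding F1_def by simp
    have g: "((\<lambda>w. exp (z * w)) has_field_derivative (exp (z * of_real (ln (k / D c))) * z)) (at (of_real (ln (k / D c))))"
      by (auto intro!: derivative_eq_intros)
    from field_vector_diff_chain_at[OF has_vector_derivative_of_real[OF dl] g]
    show ?thesis unfolding F2_def F2'_def by (simp add: o_def)
  qed
  have part1: "has_sphere_integral (omega_cpow b x) ((R^2 * (2*pi/r)) *\<^sub>R (G2 r - G2 (-r))) R"
  proof (rule sphere_reduce[where x=x and F=F2 and F'=F2', folded r_def])
    show "0 < r" by (rule r)
    show "(F2 has_vector_derivative F2' c) (at c)" if "c \<in> {-r..r}" for c by (rule dF2[OF that])
    show "continuous_on {-r..r} F2'"
    proof -
      have nz: "\<And>c. c \<in> {-r..r} \<Longrightarrow> r^2 + R^2 - 2 * R * c \<noteq> 0" using Dpos unfolding D_def by force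
      have nz2: "\<And>c. c \<in> {-r..r} \<Longrightarrow> k / (r^2 + R^2 - 2 * R * c) \<noteq> 0" using Dpos k unfolding D_def by force
      show ?thesis unfolding F2'_def D_def by (intro continuous_intros) (use nz nz2 in auto)
    qed
    show "(G2 has_vector_derivative F2 c) (at c within {-r..r})" if c: "c \<in> {-r..r}" for c
    proof -
      have Dc: "D c > 0" using Dpos[OF c] .
      have dD: "(D has_real_derivative (-2*R)) (at c within {-r..r})" unfolding D_def by (auto intro!: derivative_eq_intros)
      have d1: "(F2 has_vector_derivative F2' c) (at c within {-r..r})"
        using dF2[OF c] has_vector_derivative_at_within by blast
      from has_vector_derivative_mult_left[OF has_vector_derivative_mult[OF d1 has_vector_derivative_of_real[OF dD]], of C]
      have "(G2 has_vector_derivative ((F2 c * of_real (-2*R) + F2' c * of_real (D c)) * C)) (at c within {-r..r})"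
        unfolding G2_def by simp
      moreover have "(F2 c * of_real (-2*R) + F2' c * of_real (D c)) * C = F2 c"
      proof -
        have "F2' c * of_real (D c) = of_real (2 * R) * (F2 c * z)"
          unfolding F2'_def F2_def using Dc by (simp add: field_simps)
        then have "F2 c * of_real (-2*R) + F2' c * of_real (D c) = F2 c * (2 * \<i> * of_real R * of_real b)"
          by (simp add: z1 algebra_simps)
        then show ?thesis unfolding C_def using R assms(4) by (simp add: field_simps)
      qed
      ultimately show ?thesis by simp
    qed
    show "omega_cpow b x (sph R p) = F2 (inner x (sph 1 p))" for p
      unfolding omega_cpow_def F2_def om z_def ..
  qed
  have Rr: "\<bar>R - r\<bar> > 0" using rR by simp
  have q1: "k / D r = (R + r) / \<bar>R - r\<bar>" 
  proof -
    have "\<bar>R - r\<bar> * (R + r) / (\<bar>R - r\<bar> * \<bar>R - r\<bar>) = (R + r) / \<bar>R - r\<bar>"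
      using Rr by (metis mult.commute mult_divide_mult_cancel_left_if order_less_irrefl)
    then show ?thesis unfolding Dr kf power2_eq_square .
  qed
  have q2: "k / D (-r) = \<bar>R - r\<bar> / (R + r)"
  proof -
    have "\<bar>R - r\<bar> * (R + r) / ((R + r) * (R + r)) = \<bar>R - r\<bar> / (R + r)"
      by (rule nonzero_mult_divide_mult_cancel_right) (use R r in simp)
    then show ?thesis unfolding Dmr kf power2_eq_square .
  qed
  have l1: "ln (k / D r) = L" by (simp add: q1 L_def)
  have l2: "ln (k / D (-r)) = - L" unfolding q2 L_eq using Rr R r by (simp add: ln_div)
  have kD1: "k / D r > 0" and kD2: "k / D (-r) > 0" using q1 q2 Rr R r by auto
  have Dr0: "D r \<noteq> 0" using Dpos[of r] r by simp
  have Dmr0: "D (-r) \<noteq> 0" using Dpos[of "-r"] r by simp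
  have e1: "F2 r * of_real (D r) = of_real k * cis (b * L)"
  proof -
    have "F2 r = of_real (k / D r) * cis (b * ln (k / D r))" unfolding F2_def z_def by (rule expz[OF kD1])
    then show ?thesis using Dr0 by (simp add: l1 field_simps)
  qed
  have e2: "F2 (-r) * of_real (D (-r)) = of_real k * cis (- (b * L))"
  proof -
    have "F2 (-r) = of_real (k / D (-r)) * cis (b * ln (k / D (-r)))" unfolding F2_def z_def by (rule expz[OF kD2])
    then show ?thesis using Dmr0 by (simp add: l2 field_simps)
  qed
  have cisd: "cis t - cis (-t) = 2 * \<i> * of_real (sin t)" for t by (simp add: complex_eq_iff)
  have "G2 r - G2 (-r) = (F2 r * of_real (D r) - F2 (-r) * of_real (D (-r))) * C"
    unfolding G2_def by (simp add: algebra_simps)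
  also have "\<dots> = of_real k * (2 * \<i> * of_real (sin (b * L))) * C"
  proof -
    have "of_real k * cis (b * L) - of_real k * cis (- (b * L)) = of_real k * (2 * \<i> * of_real (sin (b * L)))"
      by (simp only: cisd[symmetric] right_diff_distrib)
    then show ?thesis unfolding e1 e2 by simp
  qed
  also have "\<dots> = of_real (k * sin (b * L) / (R * b))"
    unfolding C_def using R assms(4) by (simp add: field_simps)
  finally have gv: "G2 r - G2 (-r) = of_real (k * sin (b * L) / (R * b))" .
  have val1: "(R^2 * (2*pi/r)) *\<^sub>R (G2 r - G2 (-r)) = of_real ((2 * pi * R / r) * (k / b) * sin (b * L))"
    unfolding gv scaleR_conv_of_real using R r assms(4) by (simp add: power2_eq_square field_simps)
  show ?thesis using part1 part2 unfolding val1 val2 unfolding r_def k_def L_def by simp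
qed


end
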